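(* For all $n\ge1$: $T_{nn}=U_{n,n+1}=-1$, $T_{n0}=(-1)^{n+1}4n$, $U_{n0}=(-1)^{n+1}4(2n-1)$. Moreover $T_{nj}\ne0$ only when $0\le j\le n$, and $U_{nj}\ne0$ only when $0\le j\le n+1$.
   Context: The numbers $T_{nj},U_{nj}$ (integers $n\ge0$, $j$) are defined by: $T_{nj}=U_{nj}=0$ whenever $j<0$; $T_{0j}=0$ for all $j\ge1$, $U_{01}=-1$, $U_{0j}=0$ for all $j\ge2$; $T_{10}=4$, $U_{10}=4$; and for all $n\ge1$, $j\ge0$ with $(n,j)\ne(1,0)$: $T_{nj}=-3T_{n-1,j}+U_{n-1,j}$ and $U_{nj}=-4T_{n-1,j}+U_{n-1,j}+T_{n,j-1}$. *)

theory Defs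
  imports Main
begin

end

theory Submission
  imports Defs
begin

theorem lemma8p2:
  fixes T U :: "nat \<Rightarrow> int \<Rightarrow> int"
  assumes neg: "\<And>n j. j < 0 \<Longrightarrow> T n j = 0 \<and> U n j = 0"
    and T0: "\<And>j. j \<ge> 1 \<Longrightarrow> T 0 j = 0"
    and U01: "U 0 1 = -1"
    and U0: "\<And>j. j \<ge> 2 \<Longrightarrow> U 0 j = 0"
    and T10: "T 1 0 = 4"
    and U10: "U 1 0 = 4"
    and recT: "\<And>n j. n \<ge> 1 \<Longrightarrow> j \<ge> 0 \<Longrightarrow> (n, j) \<noteq> (1, 0) \<Longrightarrow>
                 T n j = -3 * T (n - 1) j + U (n - 1) j"
    and recU: "\<And>n j. n \<ge> 1 \<Longrightarrow> j \<ge> 0 \<Longrightarrow> (n, j) \<noteq> (1, 0) \<Longrightarrow>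
                 U n j = -4 * T (n - 1) j + U (n - 1) j + T n (j - 1)"
  shows "\<forall>n\<ge>1.
           T n (int n) = -1 \<and> U n (int n + 1) = -1 \<and>
           T n 0 = (-1) ^ (n + 1) * 4 * int n \<and>
           U n 0 = (-1) ^ (n + 1) * 4 * (2 * int n - 1) \<and>
           (\<forall>j. T n j \<noteq> 0 \<longrightarrow> 0 \<le> j \<and> j \<le> int n) \<and>
           (\<forall>j. U n j \<noteq> 0 \<longrightarrow> 0 \<le> j \<and> j \<le> int n + 1)"
proof -
  have T1: "T 1 1 = -1" using recT[of 1 1] T0[of 1] U01 by simp
  have T1j: "\<And>j. j \<ge> 2 \<Longrightarrow> T 1 j = 0" using recT T0 U0 by force
  have U12: "U 1 2 = -1" using recU[of 1 2] T0[of 2] U0[of 2] T1 by simp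
  have U1j: "\<And>j. j \<ge> 3 \<Longrightarrow> U 1 j = 0"
  proof -
    fix j :: int assume "j \<ge> 3"
    then show "U 1 j = 0" using recU[of 1 j] T0[of j] U0[of j] T1j[of "j-1"] by simp
  qed
  have base1: "T 1 (int 1) = -1 \<and> U 1 (int 1 + 1) = -1 \<and>
           T 1 0 = (-1) ^ (1 + 1) * 4 * int 1 \<and>
           U 1 0 = (-1) ^ (1 + 1) * 4 * (2 * int 1 - 1) \<and>
           (\<forall>j. T 1 j \<noteq> 0 \<longrightarrow> 0 \<le> j \<and> j \<le> int 1) \<and>
           (\<forall>j. U 1 j \<noteq> 0 \<longrightarrow> 0 \<le> j \<and> j \<le> int 1 + 1)"
  proof (intro conjI allI impI)
    fix j assume "T 1 j \<noteq> 0" then show "0 \<le> j" using neg by force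
  next
    fix j assume "T 1 j \<noteq> 0" then show "j \<le> int 1" using T1j[of j] by (cases "j \<ge> 2") auto
  next
    fix j assume "U 1 j \<noteq> 0" then show "0 \<le> j" using neg by force
  next
    fix j assume "U 1 j \<noteq> 0" then show "j \<le> int 1 + 1" using U1j[of j] by (cases "j \<ge> 3") auto
  qed (use T1 U12 T10 U10 in simp_all)
  have step1: "T (Suc n) (int (Suc n)) = -1 \<and> U (Suc n) (int (Suc n) + 1) = -1 \<and>
           T (Suc n) 0 = (-1) ^ (Suc n + 1) * 4 * int (Suc n) \<and>
           U (Suc n) 0 = (-1) ^ (Suc n + 1) * 4 * (2 * int (Suc n) - 1) \<and>
           (\<forall>j. T (Suc n) j \<noteq> 0 \<longrightarrow> 0 \<le> j \<and> j \<le> int (Suc n)) \<and>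
           (\<forall>j. U (Suc n) j \<noteq> 0 \<longrightarrow> 0 \<le> j \<and> j \<le> int (Suc n) + 1)"
    if n1: "n \<ge> 1" and IH: "T n (int n) = -1 \<and> U n (int n + 1) = -1 \<and>
           T n 0 = (-1) ^ (n + 1) * 4 * int n \<and>
           U n 0 = (-1) ^ (n + 1) * 4 * (2 * int n - 1) \<and>
           (\<forall>j. T n j \<noteq> 0 \<longrightarrow> 0 \<le> j \<and> j \<le> int n) \<and>
           (\<forall>j. U n j \<noteq> 0 \<longrightarrow> 0 \<le> j \<and> j \<le> int n + 1)" for n
  proof -
    have ne: "\<And>j. (Suc n, j) \<noteq> (1, 0)" using n1 by simp
    have rT: "\<And>j. j \<ge> 0 \<Longrightarrow> T (Suc n) j = -3 * T n j + U n j"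
      using recT[of "Suc n"] ne by (metis diff_Suc_1 le_add1 plus_1_eq_Suc)
    have rU: "\<And>j. j \<ge> 0 \<Longrightarrow> U (Suc n) j = -4 * T n j + U n j + T (Suc n) (j - 1)"
      using recU[of "Suc n"] ne by (metis diff_Suc_1 le_add1 plus_1_eq_Suc)
    from IH have Tz: "\<And>j. j > int n \<Longrightarrow> T n j = 0" by force
    from IH have Uz: "\<And>j. j > int n + 1 \<Longrightarrow> U n j = 0" by force
    have TSz: "\<And>j. j > int n + 1 \<Longrightarrow> T (Suc n) j = 0" using rT Tz Uz by simp
    have USz: "\<And>j. j > int n + 2 \<Longrightarrow> U (Suc n) j = 0"
    proof -
      fix j :: int assume "j > int n + 2"
      then show "U (Suc n) j = 0" using rU[of j] Tz[of j] Uz[of j] TSz[of "j-1"] by simp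
    qed
    have a: "T (Suc n) (int (Suc n)) = -1"
    proof -
      have "int (Suc n) = int n + 1" by simp
      moreover have "T (Suc n) (int n + 1) = -1" using rT[of "int n + 1"] Tz[of "int n + 1"] IH by simp
      ultimately show ?thesis by metis
    qed
    have b: "U (Suc n) (int (Suc n) + 1) = -1"
    proof -
      have e: "int (Suc n) + 1 = int n + 2" "int n + 2 - 1 = int n + 1" by simp_all
      have a': "T (Suc n) (int n + 1) = -1" using a by (metis add.commute of_nat_Suc)
      have "U (Suc n) (int n + 2) = -4 * T n (int n + 2) + U n (int n + 2) + T (Suc n) (int n + 2 - 1)"
        using rU[of "int n + 2"] by simp
      also have "\<dots> = -1" using Tz[of "int n + 2"] Uz[of "int n + 2"] a' e(2) by (simp only: mult_zero_right add_0 add_0_right)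
      finally have "U (Suc n) (int n + 2) = -1" .
      then show ?thesis using e(1) by metis
    qed
    have c: "T (Suc n) 0 = (-1) ^ (Suc n + 1) * 4 * int (Suc n)"
    proof -
      have p: "(-1::int) ^ (Suc n + 1) = - ((-1) ^ (n + 1))" by simp
      have "T (Suc n) 0 = -3 * T n 0 + U n 0" using rT[of 0] by simp
      then show ?thesis unfolding p using IH by (simp add: algebra_simps)
    qed
    have d: "U (Suc n) 0 = (-1) ^ (Suc n + 1) * 4 * (2 * int (Suc n) - 1)"
    proof -
      have p: "(-1::int) ^ (Suc n + 1) = - ((-1) ^ (n + 1))" by simp
      have "U (Suc n) 0 = -4 * T n 0 + U n 0" using rU[of 0] neg[of "-1" "Suc n"] by simp
      then show ?thesis unfolding p using IH by (simp add: algebra_simps)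
    qed
    show ?thesis
    proof (intro conjI allI impI a b c d)
      fix j assume "T (Suc n) j \<noteq> 0" then show "0 \<le> j" using neg by force
    next
      fix j assume "T (Suc n) j \<noteq> 0" then show "j \<le> int (Suc n)" using TSz[of j] by (cases "j > int n + 1") auto
    next
      fix j assume "U (Suc n) j \<noteq> 0" then show "0 \<le> j" using neg by force
    next
      fix j assume "U (Suc n) j \<noteq> 0" then show "j \<le> int (Suc n) + 1" using USz[of j] by (cases "j > int n + 2") auto
    qed
  qed
  show ?thesis
  proof (intro allI impI)
    fix n :: nat assume "n \<ge> 1"
    then show "T n (int n) = -1 \<and> U n (int n + 1) = -1 \<and>
           T n 0 = (-1) ^ (n + 1) * 4 * int n \<and>
           U n 0 = (-1) ^ (n + 1) * 4 * (2 * int n - 1) \<and>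
           (\<forall>j. T n j \<noteq> 0 \<longrightarrow> 0 \<le> j \<and> j \<le> int n) \<and>
           (\<forall>j. U n j \<noteq> 0 \<longrightarrow> 0 \<le> j \<and> j \<le> int n + 1)"
    proof (induction n rule: dec_induct)
      case base show ?case by (rule base1)
    next
      case (step m) then show ?case using step1 by blast
    qed
  qed
qed

end
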